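(* If $h:[0,\infty)\to[\frac{\beta u_0-1}{r},\frac{\beta u_0}{r}]$ is a decreasing solution to the HJB equation, then $h$ is strictly decreasing.
   Context: Fix $\mu\in\mathbb R$, $\sigma>0$, $u_0>0$, $r>0$, $\beta>0$, $d>0$. The HJB equation is $$-rh(z)-\mu h'(z)+\tfrac{\sigma^2}{2}h''(z)+\sup_{u\in[0,u_0]}\{(\beta+h'(z))u\}=\mathbf 1_{\{z>d\}}.$$ A solution to the HJB equation is a function $h:[0,\infty)\to[\frac{\beta u_0-1}{r},\frac{\beta u_0}{r}]$ that is continuously differentiable on $[0,\infty)$, twice continuously differentiable on $[0,d]$ and on $(d,\infty)$ respectively (with $h'(0),h''(0)$ the right derivatives and $h''(d)$ the left second derivative), and satisfies the HJB equation for all $z\ge0$. *)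

theory Defs
  imports "HOL-Analysis.Analysis"
begin

text \<open>A solution to the HJB equation on [0,\<infinity>). The derivative functions dh (first
derivative) and ddh (second derivative) are witnesses: dh is the derivative of h on
[0,\<infinity>) (right derivative at 0) and is continuous there; ddh is the derivative of dh
on [0,d] (one-sided at the endpoints, so ddh d is the left second derivative) and on
(d,\<infinity>), continuous on each piece.\<close>

definition HJB_solution ::
  "real \<Rightarrow> real \<Rightarrow> real \<Rightarrow> real \<Rightarrow> real \<Rightarrow> real \<Rightarrow> (real \<Rightarrow> real) \<Rightarrow> bool" where
  "HJB_solution \<mu> \<sigma> u0 r \<beta> d h \<longleftrightarrow>
     (\<forall>z\<ge>0. (\<beta> * u0 - 1) / r \<le> h z \<and> h z \<le> \<beta> * u0 / r) \<and>
     (\<exists>dh ddh.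
        (\<forall>z\<ge>0. (h has_real_derivative dh z) (at z within {0..})) \<and>
        continuous_on {0..} dh \<and>
        (\<forall>z\<in>{0..d}. (dh has_real_derivative ddh z) (at z within {0..d})) \<and>
        continuous_on {0..d} ddh \<and>
        (\<forall>z>d. (dh has_real_derivative ddh z) (at z)) \<and>
        continuous_on {d<..} ddh \<and>
        (\<forall>z\<ge>0. - r * h z - \<mu> * dh z + \<sigma>\<^sup>2 / 2 * ddh z
                  + (SUP u\<in>{0..u0}. (\<beta> + dh z) * u)
                = (if z > d then 1 else 0)))"

end

theory Submission
  imports Defs
begin

lemma sup_lin:
  fixes k u0 :: real assumes "u0 > 0"
  shows "(SUP u\<in>{0..u0}. k * u) = u0 * max k 0"
proof (cases "k \<ge> 0")
  case True
  have "(SUP u\<in>{0..u0}. k * u) = k * u0"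
    by (rule cSup_eq_maximum) (use assms True in \<open>auto intro!: mult_left_mono\<close>)
  then show ?thesis using True by simp
next
  case False
  have "(SUP u\<in>{0..u0}. k * u) = k * 0"
    by (rule cSup_eq_maximum) (use assms False in \<open>auto simp: mult_le_0_iff\<close>)
  then show ?thesis using False by simp
qed

lemma deriv_const_zero:
  fixes f :: "real \<Rightarrow> real"
  assumes "a < z" "z < b" "\<forall>w\<in>{a<..<b}. f w = c" "(f has_real_derivative D) (at z)"
  shows "D = 0"
proof -
  have "((\<lambda>_. c) has_real_derivative D) (at z)"
    using has_field_derivative_transform_within_open[OF assms(4), of "{a<..<b}" "\<lambda>_. c"] assms
    by auto
  then show ?thesis using DERIV_const DERIV_unique by blast
qed

lemma cont_pos_nbhd:
  fixes f :: "real \<Rightarrow> real"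
  assumes "continuous_on S f" "x \<in> S" "f x > 0"
  shows "\<exists>\<delta>>0. \<forall>z\<in>S. dist z x < \<delta> \<longrightarrow> f z > 0"
proof -
  obtain \<delta> where "\<delta> > 0" "\<forall>z\<in>S. dist z x < \<delta> \<longrightarrow> dist (f z) (f x) < f x"
    using assms continuous_on_iff by metis
  then show ?thesis
    by (intro exI[of _ \<delta>]) (auto simp: dist_real_def abs_less_iff)
qed

lemma energy_bound:
  fixes g g1 a b :: real
  shows "\<bar>2*g*g1 + 2*g1*(a*g + b*g1)\<bar> \<le> (1 + \<bar>a\<bar> + 2*\<bar>b\<bar>) * (g^2 + g1^2)"
proof -
  have s: "\<bar>2*g*g1\<bar> \<le> g^2 + g1^2"
  proof -
    have "0 \<le> (\<bar>g\<bar> - \<bar>g1\<bar>)^2" by simp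
    then show ?thesis by (simp add: power2_eq_square abs_mult algebra_simps)
  qed
  have e: "2*g*g1 + 2*g1*(a*g + b*g1) = 2*g*g1 + a*(2*g*g1) + 2*b*g1^2"
    by (simp add: algebra_simps power2_eq_square)
  have t2: "\<bar>a*(2*g*g1)\<bar> \<le> \<bar>a\<bar> * (g^2+g1^2)"
    using s by (simp add: abs_mult mult_left_mono)
  have t3: "\<bar>2*b*g1^2\<bar> \<le> 2*\<bar>b\<bar> * (g^2+g1^2)"
    by (simp add: abs_mult mult_left_mono)
  have r: "(1 + \<bar>a\<bar> + 2*\<bar>b\<bar>) * (g^2 + g1^2) = (g^2 + g1^2) + \<bar>a\<bar> * (g^2+g1^2) + 2*\<bar>b\<bar> * (g^2+g1^2)"
    by (simp add: algebra_simps)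
  have "\<bar>2*g*g1 + a*(2*g*g1) + 2*b*g1^2\<bar> \<le> \<bar>2*g*g1\<bar> + \<bar>a*(2*g*g1)\<bar> + \<bar>2*b*g1^2\<bar>"
    by (rule order_trans[OF abs_triangle_ineq]) (simp add: abs_triangle_ineq)
  then show ?thesis unfolding e r using s t2 t3 by linarith
qed

lemma ode_zero:
  fixes g gd gdd :: "real \<Rightarrow> real" and a b p q :: real
  assumes pq: "p \<le> q"
    and cg: "continuous_on {p..q} g" and cg1: "continuous_on {p..q} gd"
    and dg: "\<And>z. p < z \<Longrightarrow> z < q \<Longrightarrow> (g has_real_derivative gd z) (at z)"
    and dg1: "\<And>z. p < z \<Longrightarrow> z < q \<Longrightarrow> (gd has_real_derivative gdd z) (at z)"
    and eq: "\<And>z. p < z \<Longrightarrow> z < q \<Longrightarrow> gdd z = a * g z + b * gd z"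
    and init: "(g p = 0 \<and> gd p = 0) \<or> (g q = 0 \<and> gd q = 0)"
  shows "\<forall>z\<in>{p..q}. g z = 0"
proof -
  define K where "K = 1 + \<bar>a\<bar> + 2*\<bar>b\<bar>"
  define E where "E z = (g z)^2 + (gd z)^2" for z
  have E0: "E z \<ge> 0" for z unfolding E_def by simp
  have dE: "(E has_real_derivative (2*g z*gd z + 2*gd z*(a*g z + b*gd z))) (at z)"
    if "p < z" "z < q" for z
  proof -
    have "(E has_real_derivative (2*g z*gd z + 2*gd z*gdd z)) (at z)"
      unfolding E_def
      by (auto intro!: derivative_eq_intros dg[OF that] dg1[OF that] simp: algebra_simps)
    then show ?thesis using eq[OF that] by simp
  qed
  have bnd: "\<bar>2*g z*gd z + 2*gd z*(a*g z + b*gd z)\<bar> \<le> K * E z" for z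
    unfolding K_def E_def by (rule energy_bound)
  have cE: "continuous_on {p..q} E"
    unfolding E_def[abs_def] by (intro continuous_intros cg cg1)
  have Ez: "E z = 0" if z: "z \<in> {p..q}" for z
  proof (cases "g p = 0 \<and> gd p = 0")
    case True
    define F where "F z = E z * exp (- K * z)" for z
    have "F p \<ge> F z"
    proof (rule DERIV_nonpos_imp_decreasing_open[of p z F])
      show "p \<le> z" using z by simp
      show "continuous_on {p..z} F" unfolding F_def[abs_def]
        by (intro continuous_intros continuous_on_subset[OF cE]) (use z in auto)
      fix x assume x: "p < x" "x < z"
      let ?E' = "2*g x*gd x + 2*gd x*(a*g x + b*gd x)"
      have "(F has_real_derivative (?E' * exp (- K * x) + E x * (exp (- K * x) * (- K)))) (at x)"
        unfolding F_def using x z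
        by (intro derivative_eq_intros dE) (auto intro: dE)
      moreover have "?E' * exp (- K * x) + E x * (exp (- K * x) * (- K)) \<le> 0"
      proof -
        have "?E' - K * E x \<le> 0" using bnd[of x] by linarith
        then have "(?E' - K * E x) * exp (- K * x) \<le> 0" by (simp add: mult_nonpos_nonneg)
        then show ?thesis by (simp add: algebra_simps)
      qed
      ultimately show "\<exists>y. (F has_real_derivative y) (at x) \<and> y \<le> 0" by blast
    qed
    moreover have "F p = 0" using True unfolding F_def E_def by simp
    ultimately have "E z * exp (- K * z) \<le> 0" unfolding F_def by simp
    then have "E z \<le> 0" by (simp add: mult_le_0_iff)
    then show ?thesis using E0[of z] by simp
  next
    case False
    then have True': "g q = 0 \<and> gd q = 0" using init by blast
    define F where "F z = E z * exp (K * z)" for z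
    have "F z \<le> F q"
    proof (rule DERIV_nonneg_imp_increasing_open[of z q F])
      show "z \<le> q" using z by simp
      show "continuous_on {z..q} F" unfolding F_def[abs_def]
        by (intro continuous_intros continuous_on_subset[OF cE]) (use z in auto)
      fix x assume x: "z < x" "x < q"
      let ?E' = "2*g x*gd x + 2*gd x*(a*g x + b*gd x)"
      have "(F has_real_derivative (?E' * exp (K * x) + E x * (exp (K * x) * K))) (at x)"
        unfolding F_def using x z
        by (intro derivative_eq_intros dE) (auto intro: dE)
      moreover have "?E' * exp (K * x) + E x * (exp (K * x) * K) \<ge> 0"
      proof -
        have "?E' + K * E x \<ge> 0" using bnd[of x] by linarith
        then have "(?E' + K * E x) * exp (K * x) \<ge> 0" by simp
        then show ?thesis by (simp add: algebra_simps)
      qed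
      ultimately show "\<exists>y. (F has_real_derivative y) (at x) \<and> y \<ge> 0" by blast
    qed
    moreover have "F q = 0" using True' unfolding F_def E_def by simp
    ultimately have "E z * exp (K * z) \<le> 0" unfolding F_def by simp
    then have "E z \<le> 0" by (simp add: mult_le_0_iff)
    then show ?thesis using E0[of z] by simp
  qed
  show ?thesis
  proof
    fix z assume "z \<in> {p..q}"
    then have "E z = 0" by (rule Ez)
    then show "g z = 0" unfolding E_def
      by (metis add_nonneg_eq_0_iff power_eq_0_iff zero_le_power2)
  qed
qed


lemma const_closure:
  fixes f :: "real \<Rightarrow> real"
  assumes "continuous_on {a..b} f" "a < b" "\<forall>w\<in>{a<..<b}. f w = k" "z \<in> {a..b}"
  shows "f z = k"
  using continuous_constant_on_closure[of "{a<..<b}" f k z] assms by auto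

theorem lemma2p1:
  fixes \<mu> \<sigma> u0 r \<beta> d :: real and h :: "real \<Rightarrow> real"
  assumes "\<sigma> > 0" and "u0 > 0" and "r > 0" and "\<beta> > 0" and "d > 0"
    and "HJB_solution \<mu> \<sigma> u0 r \<beta> d h"
    and "\<forall>x y. 0 \<le> x \<longrightarrow> x \<le> y \<longrightarrow> h y \<le> h x"
  shows "\<forall>x y. 0 \<le> x \<longrightarrow> x < y \<longrightarrow> h y < h x"
proof -
  note sg = assms(1) and u0 = assms(2) and rp = assms(3) and bp = assms(4) and dp = assms(5)
  have mono: "h w \<le> h v" if "0 \<le> v" "v \<le> w" for v w using assms(7) that by blast
  have bnds: "(\<beta> * u0 - 1) / r \<le> h z" "h z \<le> \<beta> * u0 / r" if "z \<ge> 0" for z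
    using assms(6) that unfolding HJB_solution_def by auto
  obtain dh ddh where
    hd: "\<forall>z\<ge>0. (h has_real_derivative dh z) (at z within {0..})" and
    cdh: "continuous_on {0..} dh" and
    dhd: "\<forall>z\<in>{0..d}. (dh has_real_derivative ddh z) (at z within {0..d})" and
    cddh: "continuous_on {0..d} ddh" and
    dhd2: "\<forall>z>d. (dh has_real_derivative ddh z) (at z)" and
    eq0: "\<forall>z\<ge>0. - r * h z - \<mu> * dh z + \<sigma>\<^sup>2 / 2 * ddh z
                  + (SUP u\<in>{0..u0}. (\<beta> + dh z) * u)
                = (if z > d then 1 else 0)"
    using assms(6) unfolding HJB_solution_def by blast
  have eqn: "- r * h z - \<mu> * dh z + \<sigma>\<^sup>2 / 2 * ddh z + u0 * max (\<beta> + dh z) 0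
      = (if z > d then 1 else 0)" if "z \<ge> 0" for z
    using eq0 that sup_lin[OF u0, of "\<beta> + dh z"] by auto
  have hat: "(h has_real_derivative dh z) (at z)" if "z > 0" for z
  proof -
    have e: "at z within {0..} = at z" by (rule at_within_interior) (use that in simp)
    have "(h has_real_derivative dh z) (at z within {0..})" using hd that by simp
    then show ?thesis using e by simp
  qed
  have dhat: "(dh has_real_derivative ddh z) (at z)" if "0 < z" "z < d" for z
  proof -
    have e: "at z within {0..d} = at z" by (rule at_within_interior) (use that in simp)
    have "(dh has_real_derivative ddh z) (at z within {0..d})" using dhd that by simp
    then show ?thesis using e by simp
  qed
  have ch: "continuous_on {0..} h"
    using DERIV_continuous_on[of "{0..}" h dh] hd by simp
  have dhle: "dh z \<le> 0" if "z \<ge> 0" for z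
  proof (rule ccontr)
    assume "\<not> dh z \<le> 0"
    then have pz: "dh z > 0" by simp
    have "(h has_real_derivative dh z) (at z within {0..})" using hd that by simp
    from has_real_derivative_pos_inc_right[OF this pz]
    obtain \<delta> where "\<delta> > 0" "\<forall>k>0. z + k \<in> {0..} \<longrightarrow> k < \<delta> \<longrightarrow> h z < h (z + k)"
      by blast
    then have "h z < h (z + \<delta>/2)" using that by auto
    moreover have "h (z + \<delta>/2) \<le> h z" using mono[of z "z + \<delta>/2"] that \<open>\<delta> > 0\<close> by auto
    ultimately show False by simp
  qed
  have dh0: "dh z = 0" if "0 \<le> a" "a < z" "z < b" "\<forall>w\<in>{a<..<b}. h w = c" for a b c z
    using deriv_const_zero[of a z b h c "dh z"] hat[of z] that by auto
  have ddh0: "ddh z = 0" if "0 \<le> a" "a < z" "z < b" "\<forall>w\<in>{a<..<b}. h w = c" "z \<noteq> d" for a b c z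
  proof (cases "z < d")
    case True
    have "\<forall>w\<in>{a<..<min b d}. dh w = 0" using dh0[of a _ b c] that by auto
    then show ?thesis using deriv_const_zero[of a z "min b d" dh 0 "ddh z"] dhat[of z] that True by auto
  next
    case False
    then have zd: "z > d" using that by simp
    have "\<forall>w\<in>{max a d<..<b}. dh w = 0" using dh0[of a _ b c] that by auto
    then show ?thesis using deriv_const_zero[of "max a d" z b dh 0 "ddh z"] dhd2 that zd by auto
  qed
  have eqc: "- r * c + u0 * \<beta> = (if z > d then 1 else 0)"
    if "0 \<le> a" "a < z" "z < b" "\<forall>w\<in>{a<..<b}. h w = c" "z \<noteq> d" for a b c z
  proof -
    have "dh z = 0" "ddh z = 0" "h z = c"
      using dh0[OF that(1-4)] ddh0[OF that] that by auto
    then show ?thesis using eqn[of z] that bp by (simp add: max_def)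
  qed
  show ?thesis
  proof (intro allI impI, rule ccontr)
    fix x y :: real
    assume x0: "0 \<le> x" and xy: "x < y" and nlt: "\<not> h y < h x"
    define c where "c = h x"
    have hxy: "\<forall>w\<in>{x..y}. h w = c"
    proof
      fix w assume "w \<in> {x..y}"
      then have "h y \<le> h w" "h w \<le> h x" using mono x0 by auto
      then show "h w = c" using nlt unfolding c_def by linarith
    qed
    define S where "S = {z. 0 \<le> z \<and> h z = c}"
    show False
    proof (cases "y > d")
      case True
      define z where "z = (max x d + y) / 2"
      have z: "0 \<le> max x d" "max x d < z" "z < y" "\<forall>w\<in>{max x d<..<y}. h w = c" "z \<noteq> d" "z > d"
        using hxy True x0 xy unfolding z_def by auto
      have "- r * c + u0 * \<beta> = 1"
        using eqc[OF z(1-5)] z(6) by simp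
      then have cval: "c = (\<beta> * u0 - 1) / r" using rp by (simp add: field_simps)
      have hge: "h w = c" if "w \<ge> x" for w
      proof -
        have "h w \<le> h x" using mono[of x w] x0 that by simp
        moreover have "c \<le> h w" using bnds(1)[of w] cval x0 that by simp
        ultimately show ?thesis unfolding c_def by simp
      qed
      have xS: "x \<in> S" unfolding S_def c_def using x0 by simp
      have bS: "bdd_below S" unfolding S_def by (auto intro: bdd_belowI[of _ 0])
      define s where "s = Inf S"
      have s0: "0 \<le> s" unfolding s_def by (rule cInf_greatest) (use xS S_def in auto)
      have sx: "s \<le> x" unfolding s_def using cInf_lower[OF xS bS] .
      have hgt: "h w = c" if ws: "w > s" for w
      proof -
        obtain v where "v \<in> S" "v < w" using cInf_less_iff[of S w] xS bS ws s_def by auto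
        then have "h w \<le> c" "0 \<le> v" using mono[of v w] unfolding S_def by auto
        moreover have "c \<le> h w" using bnds(1)[of w] cval \<open>0 \<le> v\<close> \<open>v < w\<close> by simp
        ultimately show ?thesis by simp
      qed
      have hs: "h s = c"
        using const_closure[of s "s+1" h c s] continuous_on_subset[OF ch, of "{s..s+1}"] s0 hgt by auto
      have dhgt: "dh w = 0" if "w > s" for w using dh0[of s w "w+1" c] hgt s0 that by auto
      have dhs: "dh s = 0"
        using const_closure[of s "s+1" dh 0 s] continuous_on_subset[OF cdh, of "{s..s+1}"] s0 dhgt by auto
      consider "s < d" | "s = d" | "s > d" by linarith
      then show False
      proof cases
        case 1
        have "- r * c + u0 * \<beta> = 0"
          using eqc[of s "(s+d)/2" "d+1" c] hgt s0 1 by auto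
        then show False using cval rp by (simp add: field_simps)
      next
        case 2
        have "- r * c + \<sigma>\<^sup>2 / 2 * ddh d + u0 * \<beta> = 0"
          using eqn[of d] dhs hs 2 dp bp by (simp add: max_def)
        moreover have "- r * c + u0 * \<beta> = 1" using cval rp by (simp add: field_simps)
        ultimately have "\<sigma>\<^sup>2 / 2 * ddh d = -1" by linarith
        moreover have "\<sigma>\<^sup>2 / 2 > 0" using sg by simp
        ultimately have ddn: "ddh d < 0"
        proof -
          assume e1: "\<sigma>\<^sup>2 / 2 * ddh d = -1" and p1: "\<sigma>\<^sup>2 / 2 > 0"
          show ?thesis
          proof (rule ccontr)
            assume "\<not> ddh d < 0"
            then have "0 \<le> \<sigma>\<^sup>2 / 2 * ddh d" using p1 by simp
            then show False using e1 by simp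
          qed
        qed
        obtain \<delta> where \<delta>: "\<delta> > 0" "\<forall>z\<in>{0..d}. dist z d < \<delta> \<longrightarrow> (\<lambda>z. - ddh z) z > 0"
          using cont_pos_nbhd[of "{0..d}" "\<lambda>z. - ddh z" d] continuous_on_minus[OF cddh] ddn dp by auto
        define w where "w = d - min (\<delta>/2) (d/2)"
        have w: "0 < w" "w < d" "d - w < \<delta>" using \<delta> dp unfolding w_def by auto
        have c1: "continuous_on {w..d} dh" by (rule continuous_on_subset[OF cdh]) (use w in auto)
        have d1: "dh differentiable (at \<xi>)" if "w < \<xi>" "\<xi> < d" for \<xi>
        proof -
          have "(dh has_real_derivative ddh \<xi>) (at \<xi>)" by (rule dhat) (use that w in auto)
          then show ?thesis unfolding real_differentiable_def by blast
        qed
        obtain l \<xi> where \<xi>: "w < \<xi>" "\<xi> < d" "(dh has_real_derivative l) (at \<xi>)" "dh d - dh w = (d - w) * l"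
          using MVT[OF w(2) c1 d1] by blast
        have "(dh has_real_derivative ddh \<xi>) (at \<xi>)" by (rule dhat) (use \<xi> w in auto)
        then have "l = ddh \<xi>" using DERIV_unique[OF \<xi>(3)] by blast
        moreover have "ddh \<xi> < 0" using \<delta>(2) \<xi> w by (auto simp: dist_real_def)
        ultimately have "(d - w) * l < 0" using w by (simp add: mult_pos_neg)
        then have "dh w > 0" using \<xi>(4) 2 dhs by simp
        then show False using dhle[of w] w by simp
      next
        case 3
        obtain \<epsilon> where \<epsilon>: "\<epsilon> > 0" "\<forall>z\<in>{0..}. dist z s < \<epsilon> \<longrightarrow> (\<lambda>z. \<beta> + dh z) z > 0"
          using cont_pos_nbhd[of "{0..}" "\<lambda>z. \<beta> + dh z" s] continuous_on_add[OF continuous_on_const cdh] dhs bp s0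
          by auto
        define p where "p = s - min (\<epsilon>/2) ((s-d)/2)"
        have p: "d < p" "p < s" "s - p < \<epsilon>" using \<epsilon>(1) 3 unfolding p_def by (auto simp: min_def field_simps)
        have "\<forall>z\<in>{p..s}. (\<lambda>z. h z - c) z = 0"
        proof (rule ode_zero[where gd = dh and gdd = ddh and a = "2*r/\<sigma>\<^sup>2" and b = "2*(\<mu>-u0)/\<sigma>\<^sup>2"])
          show "p \<le> s" using p by simp
          show "continuous_on {p..s} (\<lambda>z. h z - c)"
            by (intro continuous_on_diff continuous_on_const continuous_on_subset[OF ch]) (use p dp in auto)
          show "continuous_on {p..s} dh"
            using continuous_on_subset[OF cdh, of "{p..s}"] p dp by auto
          show "((\<lambda>z. h z - c) has_real_derivative dh z) (at z)" if "p < z" "z < s" for z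
            using hat[of z] that p dp by (auto intro!: derivative_eq_intros)
          show "(dh has_real_derivative ddh z) (at z)" if "p < z" "z < s" for z
            using dhd2 that p by auto
          show "ddh z = 2*r/\<sigma>\<^sup>2 * (h z - c) + 2*(\<mu>-u0)/\<sigma>\<^sup>2 * dh z" if "p < z" "z < s" for z
          proof -
            have pos: "\<beta> + dh z > 0" using \<epsilon>(2) that p dp by (auto simp: dist_real_def)
            have "- r * h z - \<mu> * dh z + \<sigma>\<^sup>2 / 2 * ddh z + u0 * (\<beta> + dh z) = 1"
              using eqn[of z] pos that p dp by (simp add: max_def)
            moreover have "r * c = \<beta> * u0 - 1" using cval rp by simp
            ultimately have "\<sigma>\<^sup>2 * ddh z = 2*r * (h z - c) + 2*(\<mu>-u0) * dh z"
              by (simp add: algebra_simps)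
            moreover have s2: "\<sigma>\<^sup>2 \<noteq> 0" using sg by simp
            ultimately have "ddh z = (2*r * (h z - c) + 2*(\<mu>-u0) * dh z) / \<sigma>\<^sup>2"
              by (simp add: eq_divide_eq mult.commute)
            then show ?thesis by (simp add: add_divide_distrib)
          qed
          show "((\<lambda>z. h z - c) p = 0 \<and> dh p = 0) \<or> ((\<lambda>z. h z - c) s = 0 \<and> dh s = 0)"
            using hs dhs by simp
        qed
        then have "p \<in> S" using p dp unfolding S_def by auto
        then have "s \<le> p" unfolding s_def using cInf_lower[OF _ bS] by simp
        then show False using p by simp
      qed
    next
      case False
      define z where "z = (x + y) / 2"
      have z: "0 \<le> x" "x < z" "z < y" "\<forall>w\<in>{x<..<y}. h w = c" "z \<noteq> d" "\<not> z > d"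
        using hxy False x0 xy unfolding z_def by auto
      have "- r * c + u0 * \<beta> = 0"
        using eqc[OF z(1-5)] z(6) by simp
      then have cval: "c = \<beta> * u0 / r" using rp by (simp add: field_simps)
      have yS: "y \<in> S" unfolding S_def using hxy x0 xy by auto
      have Sd: "v \<le> d" if vS: "v \<in> S" for v
      proof (rule ccontr)
        assume "\<not> v \<le> d"
        then have vd: "v > d" by simp
        have hv: "\<forall>w\<in>{d<..<v}. h w = c"
        proof
          fix w assume w: "w \<in> {d<..<v}"
          have "h v \<le> h w" using mono[of w v] w dp by auto
          moreover have "h w \<le> c" using bnds(2)[of w] cval w dp by simp
          moreover have "h v = c" using vS unfolding S_def by simp
          ultimately show "h w = c" by simp
        qed
        have "- r * c + u0 * \<beta> = 1"
          using eqc[of d "(d+v)/2" v c] hv vd dp by auto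
        then show False using cval rp by (simp add: field_simps)
      qed
      have bS: "bdd_above S" using Sd by (rule bdd_aboveI)
      define t where "t = Sup S"
      have ty: "y \<le> t" unfolding t_def using cSup_upper[OF yS bS] .
      have td: "t \<le> d" unfolding t_def by (rule cSup_least) (use yS Sd in auto)
      have t0: "t > 0" using ty xy x0 by linarith
      have hlt: "h w = c" if w: "0 \<le> w" "w < t" for w
      proof -
        obtain v where "v \<in> S" "w < v" using less_cSup_iff[of S w] yS bS w t_def by auto
        then have "h v \<le> h w" "h v = c" using mono[of w v] w unfolding S_def by auto
        moreover have "h w \<le> c" using bnds(2)[of w] cval w by simp
        ultimately show ?thesis by simp
      qed
      have ht: "h t = c"
        using const_closure[of 0 t h c t] continuous_on_subset[OF ch, of "{0..t}"] t0 hlt by auto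
      have dhlt: "dh w = 0" if "0 < w" "w < t" for w using dh0[of 0 w t c] hlt that by auto
      have dht: "dh t = 0"
        using const_closure[of 0 t dh 0 t] continuous_on_subset[OF cdh, of "{0..t}"] t0 dhlt by auto
      consider "t < d" | "t = d" using td by linarith
      then show False
      proof cases
        case 1
        obtain \<epsilon> where \<epsilon>: "\<epsilon> > 0" "\<forall>z\<in>{0..}. dist z t < \<epsilon> \<longrightarrow> (\<lambda>z. \<beta> + dh z) z > 0"
          using cont_pos_nbhd[of "{0..}" "\<lambda>z. \<beta> + dh z" t] continuous_on_add[OF continuous_on_const cdh] dht bp t0
          by auto
        define q where "q = t + min (\<epsilon>/2) ((d-t)/2)"
        have q: "t < q" "q < d" "q - t < \<epsilon>" using \<epsilon>(1) 1 unfolding q_def by (auto simp: min_def field_simps)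
        have "\<forall>z\<in>{t..q}. (\<lambda>z. h z - c) z = 0"
        proof (rule ode_zero[where gd = dh and gdd = ddh and a = "2*r/\<sigma>\<^sup>2" and b = "2*(\<mu>-u0)/\<sigma>\<^sup>2"])
          show "t \<le> q" using q by simp
          show "continuous_on {t..q} (\<lambda>z. h z - c)"
            by (intro continuous_on_diff continuous_on_const continuous_on_subset[OF ch]) (use q t0 in auto)
          show "continuous_on {t..q} dh"
            using continuous_on_subset[OF cdh, of "{t..q}"] q t0 by auto
          show "((\<lambda>z. h z - c) has_real_derivative dh z) (at z)" if "t < z" "z < q" for z
            using hat[of z] that t0 by (auto intro!: derivative_eq_intros)
          show "(dh has_real_derivative ddh z) (at z)" if "t < z" "z < q" for z
            using dhat[of z] that q t0 by auto
          show "ddh z = 2*r/\<sigma>\<^sup>2 * (h z - c) + 2*(\<mu>-u0)/\<sigma>\<^sup>2 * dh z" if "t < z" "z < q" for z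
          proof -
            have pos: "\<beta> + dh z > 0" using \<epsilon>(2) that q t0 by (auto simp: dist_real_def)
            have "- r * h z - \<mu> * dh z + \<sigma>\<^sup>2 / 2 * ddh z + u0 * (\<beta> + dh z) = 0"
              using eqn[of z] pos that q t0 by (simp add: max_def)
            moreover have "r * c = \<beta> * u0" using cval rp by simp
            ultimately have "\<sigma>\<^sup>2 * ddh z = 2*r * (h z - c) + 2*(\<mu>-u0) * dh z"
              by (simp add: algebra_simps)
            moreover have s2: "\<sigma>\<^sup>2 \<noteq> 0" using sg by simp
            ultimately have "ddh z = (2*r * (h z - c) + 2*(\<mu>-u0) * dh z) / \<sigma>\<^sup>2"
              by (simp add: eq_divide_eq mult.commute)
            then show ?thesis by (simp add: add_divide_distrib)
          qed
          show "((\<lambda>z. h z - c) t = 0 \<and> dh t = 0) \<or> ((\<lambda>z. h z - c) q = 0 \<and> dh q = 0)"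
            using ht dht by simp
        qed
        then have "q \<in> S" using q t0 unfolding S_def by auto
        then have "q \<le> t" unfolding t_def using cSup_upper[OF _ bS] by simp
        then show False using q by simp
      next
        case 2
        define F where "F z = 1 + r * (h z - c) + (\<mu> - u0) * dh z" for z
        have cF: "continuous_on {0..} F" unfolding F_def[abs_def]
          by (intro continuous_intros ch cdh)
        obtain \<delta>1 where \<delta>1: "\<delta>1 > 0" "\<forall>z\<in>{0..}. dist z d < \<delta>1 \<longrightarrow> F z > 0"
          using cont_pos_nbhd[OF cF, of d] dp ht dht 2 unfolding F_def by auto
        obtain \<delta>2 where \<delta>2: "\<delta>2 > 0" "\<forall>z\<in>{0..}. dist z d < \<delta>2 \<longrightarrow> (\<lambda>z. \<beta> + dh z) z > 0"
          using cont_pos_nbhd[of "{0..}" "\<lambda>z. \<beta> + dh z" d] continuous_on_add[OF continuous_on_const cdh] dht bp dp 2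
          by auto
        define w where "w = d + min \<delta>1 \<delta>2 / 2"
        have w: "d < w" "w - d < \<delta>1" "w - d < \<delta>2" using \<delta>1(1) \<delta>2(1) unfolding w_def by (auto simp: min_def)
        have c1: "continuous_on {d..w} dh" by (rule continuous_on_subset[OF cdh]) (use w dp in auto)
        have d1: "dh differentiable (at \<xi>)" if "d < \<xi>" "\<xi> < w" for \<xi>
        proof -
          have "(dh has_real_derivative ddh \<xi>) (at \<xi>)" using dhd2 that by simp
          then show ?thesis unfolding real_differentiable_def by blast
        qed
        obtain l \<xi> where \<xi>: "d < \<xi>" "\<xi> < w" "(dh has_real_derivative l) (at \<xi>)" "dh w - dh d = (w - d) * l"
          using MVT[OF w(1) c1 d1] by blast
        have "(dh has_real_derivative ddh \<xi>) (at \<xi>)" using dhd2 \<xi>(1) by simp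
        then have "l = ddh \<xi>" using DERIV_unique[OF \<xi>(3)] by blast
        moreover have "ddh \<xi> > 0"
        proof -
          have pos: "\<beta> + dh \<xi> > 0" "F \<xi> > 0" using \<delta>1(2) \<delta>2(2) \<xi> w dp by (auto simp: dist_real_def)
          have "- r * h \<xi> - \<mu> * dh \<xi> + \<sigma>\<^sup>2 / 2 * ddh \<xi> + u0 * (\<beta> + dh \<xi>) = 1"
            using eqn[of \<xi>] pos \<xi> dp by (simp add: max_def)
          moreover have "r * c = \<beta> * u0" using cval rp by simp
          ultimately have "\<sigma>\<^sup>2 / 2 * ddh \<xi> = F \<xi>" unfolding F_def by (simp add: algebra_simps)
          then have "\<sigma>\<^sup>2 / 2 * ddh \<xi> > 0" using pos by simp
          then show ?thesis using sg by (simp add: zero_less_mult_iff)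
        qed
        ultimately have "dh w > 0" using \<xi>(4) w 2 dht by simp
        then show False using dhle[of w] w dp by simp
      qed
    qed
  qed
qed

end
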